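(* Let $(E_N)_{N\ge1}$ be events such that $\lim_{N\to\infty}N^{\eta'}\mathbb P(E_N)=0$ for some $\eta'>0$. Then for every $\eta>0$, $$\lim_{N\to\infty}\mathbb E\Big[\Big|\log\Big(\sum_{k=1}^N w_{I^N_k}\Big)\Big|^\eta;\,E_N\Big]=0.$$
   Context: Fix $\gamma>1$, $\beta\in(0,1)$. $\Xi$ is a Poisson point process on $(0,\infty)$ with intensity $x^{-2}dx$ and atoms $w_1>w_2>\cdots$. Conditionally on $\Xi$, $I^N=(I^N_1,\dots,I^N_N)$ are $N$ indices sampled without replacement from $\{1,\dots,\lceil N^\gamma\rceil\}$ with weights $w_i^\beta$ (each successive draw picks a not-yet-drawn index $i$ with probability proportional to $w_i^\beta$ among the not-yet-drawn ones). All random objects live on one probability space. *)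

theory Defs
  imports "HOL-Probability.Probability"
begin

definition ppp_intensity :: "real set \<Rightarrow> ennreal" where
  "ppp_intensity A = (\<integral>\<^sup>+ x\<in>A. ennreal (1 / x\<^sup>2) \<partial>lborel)"

definition ppp_count :: "(nat \<Rightarrow> 'a \<Rightarrow> real) \<Rightarrow> real set \<Rightarrow> 'a \<Rightarrow> nat" where
  "ppp_count w A x = card {i. w i x \<in> A}"

text \<open>The random sequence w (indexed from 0) lists, in strictly decreasing order, the atoms
  of a Poisson point process on (0,infinity) with intensity x^(-2) dx: counts in disjoint
  Borel sets of finite intensity are a.s. finite, independent, and Poisson distributed
  with mean the intensity of the set.\<close>
definition is_ppp_inv_sq :: "'a measure \<Rightarrow> (nat \<Rightarrow> 'a \<Rightarrow> real) \<Rightarrow> bool" where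
  "is_ppp_inv_sq M w \<longleftrightarrow>
     (\<forall>i. w i \<in> borel_measurable M) \<and>
     (AE x in M. \<forall>i. 0 < w i x \<and> w (Suc i) x < w i x) \<and>
     (\<forall>(n::nat) (A :: nat \<Rightarrow> real set).
        ((\<forall>j<n. A j \<in> sets borel \<and> A j \<subseteq> {0<..} \<and> ppp_intensity (A j) < \<infinity>)
         \<and> disjoint_family_on A {..<n}) \<longrightarrow>
        ((\<forall>j<n. AE x in M. finite {i. w i x \<in> A j}) \<and>
         (\<forall>j<n. \<forall>k::nat. measure M {x \<in> space M. ppp_count w (A j) x = k}
              = (let \<mu> = enn2real (ppp_intensity (A j)) in exp (- \<mu>) * \<mu> ^ k / fact k)) \<and>
         prob_space.indep_vars M (\<lambda>_. count_space UNIV) (\<lambda>j. ppp_count w (A j)) {..<n}))"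

text \<open>Probability of drawing the ordered injective sequence j 0, ..., j (N-1) from
  {0..<m} without replacement with weights (w i)^beta.\<close>
definition swor_prob :: "real \<Rightarrow> (nat \<Rightarrow> real) \<Rightarrow> nat \<Rightarrow> nat \<Rightarrow> (nat \<Rightarrow> nat) \<Rightarrow> real" where
  "swor_prob \<beta> ws m N j =
     (if inj_on j {..<N} \<and> j ` {..<N} \<subseteq> {..<m}
      then (\<Prod>k<N. ws (j k) powr \<beta> /
               ((\<Sum>i<m. ws i powr \<beta>) - (\<Sum>l<k. ws (j l) powr \<beta>)))
      else 0)"

text \<open>Conditionally on the sequence w, I N = (I N 0, ..., I N (N-1)) is a weighted sample
  without replacement of size N from {0..<m N}: for every event B in the sigma-algebra
  generated by w, P(I N = j and B) = E[swor_prob ... ; B].\<close>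
definition is_cond_swor ::
  "'a measure \<Rightarrow> real \<Rightarrow> (nat \<Rightarrow> nat) \<Rightarrow> (nat \<Rightarrow> 'a \<Rightarrow> real) \<Rightarrow> (nat \<Rightarrow> 'a \<Rightarrow> nat \<Rightarrow> nat) \<Rightarrow> bool" where
  "is_cond_swor M \<beta> m w I \<longleftrightarrow>
     (\<forall>N. \<forall>k<N. (\<lambda>x. I N x k) \<in> measurable M (count_space UNIV)) \<and>
     (\<forall>N (j :: nat \<Rightarrow> nat). \<forall>C \<in> sets (PiM UNIV (\<lambda>_::nat. (borel :: real measure))).
        measure M {x \<in> space M. (\<forall>k<N. I N x k = j k) \<and> (\<lambda>i. w i x) \<in> C}
        = (\<integral>x. indicator {x \<in> space M. (\<lambda>i. w i x) \<in> C} x * swor_prob \<beta> (\<lambda>i. w i x) (m N) N j \<partial>M))"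

end

theory Submission
  imports Defs "HOL-Real_Asymp.Real_Asymp"
begin


lemma intensity_atLeast:
  assumes "(c::real) > 0" shows "ppp_intensity {c..} = ennreal (1/c)"
proof -
  have "ppp_intensity {c..} = (\<integral>\<^sup>+x. ennreal (1/x\<^sup>2) * indicator {c ..} x \<partial>lborel)"
    unfolding ppp_intensity_def by (simp add: mult.commute)
  also have "\<dots> = ennreal (0 - (- 1/c))"
    apply (rule nn_integral_FTC_atLeast[where F="\<lambda>x. - 1/x"])
    using assms
       apply (auto intro!: derivative_eq_intros simp: power2_eq_square)
    by real_asymp
  finally show ?thesis by simp
qed

lemma ppp_facts:
  assumes "is_ppp_inv_sq M w" "(c::real) > 0"
  shows "AE x in M. finite {i. w i x \<in> {c..}}"
    and "measure M {x \<in> space M. ppp_count w {c..} x = k} = exp (- (1/c)) * (1/c) ^ k / fact k"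
proof -
  let ?A = "\<lambda>j::nat. {c..}"
  have "(\<forall>j<1. ?A j \<in> sets borel \<and> ?A j \<subseteq> {0<..} \<and> ppp_intensity (?A j) < \<infinity>)
         \<and> disjoint_family_on ?A {..<1}"
    using assms(2) by (auto simp: intensity_atLeast disjoint_family_on_def)
  moreover have P: "\<forall>(n::nat) (A :: nat \<Rightarrow> real set).
        ((\<forall>j<n. A j \<in> sets borel \<and> A j \<subseteq> {0<..} \<and> ppp_intensity (A j) < \<infinity>)
         \<and> disjoint_family_on A {..<n}) \<longrightarrow>
        ((\<forall>j<n. AE x in M. finite {i. w i x \<in> A j}) \<and>
         (\<forall>j<n. \<forall>k::nat. measure M {x \<in> space M. ppp_count w (A j) x = k}
              = (let \<mu> = enn2real (ppp_intensity (A j)) in exp (- \<mu>) * \<mu> ^ k / fact k)) \<and>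
         prob_space.indep_vars M (\<lambda>_. count_space UNIV) (\<lambda>j. ppp_count w (A j)) {..<n})"
    using assms(1) unfolding is_ppp_inv_sq_def by (rule conjunct2[OF conjunct2])
  ultimately have H: "(\<forall>j<1. AE x in M. finite {i. w i x \<in> ?A j}) \<and>
         (\<forall>j<1. \<forall>k::nat. measure M {x \<in> space M. ppp_count w (?A j) x = k}
              = (let \<mu> = enn2real (ppp_intensity (?A j)) in exp (- \<mu>) * \<mu> ^ k / fact k))"
    using mp[OF spec[OF spec[OF P, of 1], of ?A]] by blast
  then show "AE x in M. finite {i. w i x \<in> {c..}}" by auto
  from H show "measure M {x \<in> space M. ppp_count w {c..} x = k} = exp (- (1/c)) * (1/c) ^ k / fact k"
    using assms(2) by (auto simp: intensity_atLeast Let_def)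
qed

lemma ppp_sets:
  assumes "is_ppp_inv_sq M w" "(c::real) > 0"
  shows "{x \<in> space M. ppp_count w {c..} x = k} \<in> sets M"
proof (rule ccontr)
  assume "{x \<in> space M. ppp_count w {c..} x = k} \<notin> sets M"
  then have "measure M {x \<in> space M. ppp_count w {c..} x = k} = 0" by (rule measure_notin_sets)
  with ppp_facts(2)[OF assms, of k] assms(2) show False by simp
qed

lemma ppp_decr:
  assumes "is_ppp_inv_sq M w"
  shows "AE x in M. (\<forall>i. 0 < w i x) \<and> (\<forall>i j. i \<le> j \<longrightarrow> w j x \<le> w i x)"
proof -
  have "AE x in M. \<forall>i. 0 < w i x \<and> w (Suc i) x < w i x"
    using assms unfolding is_ppp_inv_sq_def by blast
  then show ?thesis
  proof (rule eventually_mono)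
    fix x assume h: "\<forall>i. 0 < w i x \<and> w (Suc i) x < w i x"
    have "w j x \<le> w i x" if "i \<le> j" for i j
      using lift_Suc_antimono_le[of "\<lambda>i. w i x", OF _ that] h less_imp_le by blast
    with h show "(\<forall>i. 0 < w i x) \<and> (\<forall>i j. i \<le> j \<longrightarrow> w j x \<le> w i x)" by blast
  qed
qed

lemma w0_tail:
  assumes "prob_space M" "is_ppp_inv_sq M w" "(c::real) > 0"
  shows "measure M {x \<in> space M. c < w 0 x} \<le> 1/c"
proof -
  interpret prob_space M by fact
  let ?Z = "{x \<in> space M. ppp_count w {c..} x = 0}"
  have Z: "?Z \<in> sets M" using ppp_sets[OF assms(2,3)] .
  have "measure M {x \<in> space M. c < w 0 x} \<le> measure M (space M - ?Z)"
  proof (rule finite_measure_mono_AE)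
    show "space M - ?Z \<in> sets M" using Z by auto
    show "AE x in M. x \<in> {x \<in> space M. c < w 0 x} \<longrightarrow> x \<in> space M - ?Z"
      using ppp_facts(1)[OF assms(2,3)]
    proof (rule AE_mp, intro AE_I2 impI)
      fix x assume f: "finite {i. w i x \<in> {c..}}" and x: "x \<in> {x \<in> space M. c < w 0 x}"
      then have "0 \<in> {i. w i x \<in> {c..}}" by auto
      then have "ppp_count w {c..} x \<noteq> 0" using f unfolding ppp_count_def by auto
      then show "x \<in> space M - ?Z" using x by auto
    qed
  qed
  also have "\<dots> = 1 - exp (- (1/c))" using prob_compl[OF Z] ppp_facts(2)[OF assms(2,3), of 0] by simp
  also have "\<dots> \<le> 1/c" using exp_ge_add_one_self[of "- (1/c)"] by simp
  finally show ?thesis .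
qed

lemma wm_tail:
  assumes "prob_space M" "is_ppp_inv_sq M w" "(s::real) > 0" "m \<ge> 1"
  shows "measure M {x \<in> space M. w (m - 1) x < s} \<le> (\<Sum>k<m. exp (- (1/s)) * (1/s) ^ k / fact k)"
proof -
  interpret prob_space M by fact
  let ?Z = "\<lambda>k. {x \<in> space M. ppp_count w {s..} x = k}"
  have Z: "?Z k \<in> sets M" for k using ppp_sets[OF assms(2,3)] .
  have "measure M {x \<in> space M. w (m - 1) x < s} \<le> measure M (\<Union>k\<in>{..<m}. ?Z k)"
  proof (rule finite_measure_mono_AE)
    show "(\<Union>k\<in>{..<m}. ?Z k) \<in> sets M" using Z by auto
    show "AE x in M. x \<in> {x \<in> space M. w (m - 1) x < s} \<longrightarrow> x \<in> (\<Union>k\<in>{..<m}. ?Z k)"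
      using ppp_decr[OF assms(2)]
    proof (rule AE_mp, intro AE_I2 impI)
      fix x assume d: "(\<forall>i. 0 < w i x) \<and> (\<forall>i j. i \<le> j \<longrightarrow> w j x \<le> w i x)"
        and x: "x \<in> {x \<in> space M. w (m - 1) x < s}"
      have sub: "{i. w i x \<in> {s..}} \<subseteq> {..<m-1}"
      proof
        fix i assume "i \<in> {i. w i x \<in> {s..}}"
        then have "s \<le> w i x" by auto
        show "i \<in> {..<m-1}"
        proof (rule ccontr)
          assume "i \<notin> {..<m-1}"
          then have "w i x \<le> w (m-1) x" using d by auto
          then show False using x \<open>s \<le> w i x\<close> by auto
        qed
      qed
      have "ppp_count w {s..} x \<le> m - 1" unfolding ppp_count_def
        using card_mono[OF _ sub] by auto
      then show "x \<in> (\<Union>k\<in>{..<m}. ?Z k)" using x assms(4) by auto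
    qed
  qed
  also have "\<dots> \<le> (\<Sum>k<m. measure M (?Z k))" by (rule measure_UNION_le) (use Z in auto)
  also have "\<dots> = (\<Sum>k<m. exp (- (1/s)) * (1/s) ^ k / fact k)"
    using ppp_facts(2)[OF assms(2,3)] by simp
  finally show ?thesis .
qed

lemma exp_ge_term:
  assumes "0 \<le> (x::real)" shows "x ^ n / fact n \<le> exp x"
proof -
  have "(\<Sum>i\<in>{n}. x ^ i /\<^sub>R fact i) \<le> (\<Sum>i. x ^ i /\<^sub>R fact i)"
    by (rule sum_le_suminf) (use assms summable_exp_generic[of x] in auto)
  then show ?thesis by (simp add: exp_def divide_inverse mult.commute)
qed

lemma poisson_tail:
  assumes "m \<ge> 1" "u \<ge> 3 * ln (2 * real m + 2)"
  shows "(\<Sum>k<m. exp (- exp u) * exp u ^ k / fact k) \<le> exp (- u)"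
proof -
  define l where "l = exp u"
  define q where "q = 2 * real m + 2"
  have q4: "q \<ge> 4" using assms(1) by (simp add: q_def)
  have lq: "l \<ge> q ^ 3"
  proof -
    have "3 * ln q = ln (q ^ 3)" using q4 by (simp add: ln_realpow)
    then have "exp (3 * ln q) = q ^ 3" using q4 by simp
    then show ?thesis unfolding l_def using assms(2) q_def by (metis exp_le_cancel_iff)
  qed
  have l1: "l \<ge> 1" using lq q4 by (smt (verit) one_le_power)
  have "(\<Sum>k<m. exp (- l) * l ^ k / fact k) \<le> (\<Sum>k<m. exp (- l) * l ^ m)"
  proof (rule sum_mono)
    fix k assume "k \<in> {..<m}"
    then have "l ^ k \<le> l ^ m" using l1 by (intro power_increasing) auto
    moreover have "1 \<le> (fact k :: real)" by simp
    ultimately have lk: "l ^ k / fact k \<le> l ^ m"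
    proof -
      have "l ^ k / fact k \<le> l ^ k / 1" by (rule divide_left_mono) (use l1 in auto)
      then show ?thesis using \<open>l ^ k \<le> l ^ m\<close> by simp
    qed
    show "exp (- l) * l ^ k / fact k \<le> exp (- l) * l ^ m"
      using mult_left_mono[OF lk, of "exp (- l)"] by (simp add: times_divide_eq_right)
  qed
  also have "\<dots> = m * exp (- l) * l ^ m" by simp
  also have "\<dots> \<le> exp (- u)"
  proof -
    define n where "n = 2 * m + 2"
    have qn: "q = real n" by (simp add: q_def n_def)
    have "l ^ n / fact n \<le> exp l" using l1 exp_ge_term by simp
    then have "l ^ n \<le> exp l * fact n" by (simp add: divide_le_eq)
    moreover have "(fact n :: real) \<le> q ^ n" using fact_le_power[of n] qn by simp
    ultimately have "l ^ n \<le> q ^ n * exp l"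
    proof -
      have "exp l * fact n \<le> exp l * q ^ n" using \<open>(fact n :: real) \<le> q ^ n\<close> by (intro mult_left_mono) auto
      then show ?thesis using \<open>l ^ n \<le> exp l * fact n\<close> by (metis mult.commute order_trans)
    qed
    have "q ^ n * real m \<le> q ^ n * q ^ (m+1)"
    proof -
      have "real m \<le> q" using q_def by simp
      also have "q \<le> q ^ (m+1)" using q4 by (simp add: power_increasing[of 1 "m+1" q, simplified])
      finally show ?thesis using q4 by (intro mult_left_mono) auto
    qed
    also have "\<dots> = q ^ (3 * (m+1))" 
    proof -
      have "n + (m+1) = 3*(m+1)" unfolding n_def by simp
      then show ?thesis by (metis power_add)
    qed
    also have "\<dots> = (q ^ 3) ^ (m+1)" by (simp only: power_mult)
    also have "\<dots> \<le> l ^ (m+1)" using lq q4 by (intro power_mono) auto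
    finally have A: "q ^ n * real m \<le> l ^ (m+1)" .
    have lp: "l > 0" using l1 by simp
    have e: "exp (- l) \<le> q ^ n / l ^ n"
      using \<open>l ^ n \<le> q ^ n * exp l\<close> lp by (simp add: exp_minus field_simps)
    have "m * exp (- l) * l ^ m \<le> m * (q ^ n / l ^ n) * l ^ m"
      using e lp by (intro mult_right_mono mult_left_mono) auto
    also have "\<dots> = (q ^ n * m) * l ^ m / l ^ n" by simp
    also have "\<dots> \<le> l ^ (m+1) * l ^ m / l ^ n"
      using A lp by (intro divide_right_mono mult_right_mono) auto
    also have "\<dots> = 1 / l" using lp unfolding n_def by (simp add: field_simps power_add power_mult[symmetric] power2_eq_square mult_2_right)
    also have "\<dots> = exp (- u)" unfolding l_def by (simp add: exp_minus inverse_eq_divide)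
    finally show ?thesis .
  qed
  finally show ?thesis unfolding l_def .
qed


lemma pointwise:
  fixes v :: "nat \<Rightarrow> real" and J :: "nat \<Rightarrow> nat" and N m K :: nat and \<eta> :: real
  assumes N1: "N \<ge> 1" and eta: "\<eta> > 0" and pos: "\<forall>i. 0 < v i"
    and dec: "\<forall>i j. i \<le> j \<longrightarrow> v j \<le> v i" and J: "\<forall>k<N. J k < m"
  shows "ennreal (\<bar>ln (\<Sum>k<N. v (J k))\<bar> powr \<eta>) \<le> ennreal (real K) +
     (\<Sum>j. (if exp (real (K+j) powr (1/\<eta>)) / N < v 0 then 1 else 0)
             + (if v (m-1) < exp (- (real (K+j) powr (1/\<eta>))) then 1 else 0))"
    (is "ennreal ?X \<le> _ + (\<Sum>j. ?f j)")
proof -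
  define S where "S = (\<Sum>k<N. v (J k))"
  have "v (J 0) \<le> S" unfolding S_def using N1 pos
    by (intro member_le_sum) (auto intro: less_imp_le)
  moreover have "v (m-1) \<le> v (J 0)"
  proof -
    have "J 0 < m" using J N1 by auto
    then have "J 0 \<le> m - 1" by linarith
    then show ?thesis using dec by blast
  qed
  ultimately have lowS: "v (m-1) \<le> S" by linarith
  have Spos: "S > 0" using lowS pos by (metis less_le_trans)
  have upS: "S \<le> N * v 0" unfolding S_def
    using sum_bounded_above[of "{..<N}" "\<lambda>k. v (J k)" "v 0"] dec by auto
  have X0: "?X \<ge> 0" by simp
  show ?thesis
  proof (cases "?X \<le> real K")
    case True
    then have "ennreal ?X \<le> ennreal (real K)" by (rule ennreal_leI)
    then show ?thesis by (rule order_trans) (rule add_increasing2, auto)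
  next
    case False
    define n where "n = nat \<lceil>?X\<rceil>"
    have Xn: "?X \<le> real n" unfolding n_def by linarith
    have Kn: "K < n" using False Xn unfolding n_def by linarith
    have fj: "1 \<le> ?f j" if "j < n - K" for j
    proof -
      let ?t = "real (K+j) powr (1/\<eta>)"
      have "real (K+j) < ?X" using that Xn unfolding n_def by linarith
      then have "?t < ?X powr (1/\<eta>)" using eta by (intro powr_less_mono2) auto
      also have "?X powr (1/\<eta>) = \<bar>ln S\<bar>" using eta by (simp add: S_def powr_powr)
      finally have t: "?t < \<bar>ln S\<bar>" .
      have "exp ?t / N < v 0 \<or> v (m-1) < exp (- ?t)"
      proof (cases "ln S > 0")
        case True
        then have "?t < ln S" using t by simp
        then have "exp ?t < S" using Spos by (metis exp_less_cancel_iff exp_ln)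
        then have "exp ?t < N * v 0" using upS by linarith
        then have "exp ?t / N < v 0" using N1 by (simp add: divide_less_eq mult.commute)
        then show ?thesis by blast
      next
        case False
        then have "ln S < - ?t" using t by simp
        then have "S < exp (- ?t)" using Spos by (metis exp_less_cancel_iff exp_ln)
        then show ?thesis using lowS by simp
      qed
      then show ?thesis by auto
    qed
    have "ennreal ?X \<le> ennreal (real n)" using Xn by (rule ennreal_leI)
    also have "real n = real K + real (n - K)" using Kn by simp
    also have "ennreal (real K + real (n - K)) = ennreal (real K) + (\<Sum>j<n-K. 1)"
      by (simp add: ennreal_plus ennreal_of_nat_eq_real_of_nat)
    also have "(\<Sum>j<n-K. 1) \<le> (\<Sum>j<n-K. ?f j)" using fj by (intro sum_mono) auto
    also have "(\<Sum>j<n-K. ?f j) \<le> (\<Sum>j. ?f j)" by (rule sum_le_suminf[OF summableI]) auto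
    finally show ?thesis by (simp add: add_left_mono)
  qed
qed


lemma I_valid:
  assumes "prob_space M" "is_cond_swor M \<beta> m w I"
  shows "AE x in M. \<forall>k<N. I N x k < m N"
proof -
  interpret prob_space M by fact
  have meas: "(\<lambda>x. I N x k) \<in> measurable M (count_space UNIV)" if "k < N" for k
    using assms(2) that unfolding is_cond_swor_def by blast
  have eq: "\<And>j C. C \<in> sets (PiM UNIV (\<lambda>_::nat. (borel :: real measure))) \<Longrightarrow>
        measure M {x \<in> space M. (\<forall>k<N. I N x k = j k) \<and> (\<lambda>i. w i x) \<in> C}
        = (\<integral>x. indicator {x \<in> space M. (\<lambda>i. w i x) \<in> C} x * swor_prob \<beta> (\<lambda>i. w i x) (m N) N j \<partial>M)"
    using assms(2) unfolding is_cond_swor_def by blast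
  let ?L = "{xs::nat list. length xs = N}"
  have "AE x in M. \<forall>xs\<in>?L. (\<exists>k<N. m N \<le> xs!k) \<longrightarrow> \<not> (\<forall>k<N. I N x k = xs!k)"
  proof (rule AE_ball_countable')
    show "countable ?L" by (rule countableI_type)
    fix xs assume "xs \<in> ?L"
    show "AE x in M. (\<exists>k<N. m N \<le> xs!k) \<longrightarrow> \<not> (\<forall>k<N. I N x k = xs!k)"
    proof (cases "\<exists>k<N. m N \<le> xs!k")
      case False then show ?thesis by (intro AE_I2) (meson not_le)
    next
      case True
      let ?B = "{x \<in> space M. \<forall>k<N. I N x k = xs!k}"
      have B: "?B \<in> sets M"
      proof -
        have "{x \<in> space M. \<forall>k\<in>{..<N}. I N x k = xs!k} \<in> sets M"
        proof (rule sets.sets_Collect_finite_All)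
          fix k assume "k \<in> {..<N}"
          then have "(\<lambda>x. I N x k) -` {xs!k} \<inter> space M \<in> sets M"
            using meas by (intro measurable_sets) auto
          then show "{x \<in> space M. I N x k = xs!k} \<in> sets M"
            by (simp add: vimage_def Int_def conj_commute)
        qed auto
        then show ?thesis by (simp only: Ball_def lessThan_iff)
      qed
      have U: "UNIV \<in> sets (PiM UNIV (\<lambda>_::nat. (borel :: real measure)))"
        using sets.top[of "PiM UNIV (\<lambda>_::nat. (borel :: real measure))"] by (simp only: space_PiM space_borel PiE_UNIV)
      have sw: "swor_prob \<beta> (\<lambda>i. w i x) (m N) N (\<lambda>i. xs!i) = 0" for x
        using True unfolding swor_prob_def by auto
      have "measure M ?B = 0"
        using eq[OF U, of "\<lambda>i. xs!i"] by (simp only: sw mult_zero_right integral_zero UNIV_I simp_thms)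
      then have "emeasure M ?B = 0" using emeasure_eq_measure[of ?B] by (simp only: ennreal_0)
      then have "?B \<in> null_sets M" using B by (rule null_setsI)
      from AE_not_in[OF this] show ?thesis
        by (rule AE_mp) (intro AE_I2, auto)
    qed
  qed
  then show ?thesis
  proof (rule eventually_mono)
    fix x assume h: "\<forall>xs\<in>?L. (\<exists>k<N. m N \<le> xs!k) \<longrightarrow> \<not> (\<forall>k<N. I N x k = xs!k)"
    have L: "map (I N x) [0..<N] \<in> ?L" by simp
    show "\<forall>k<N. I N x k < m N"
    proof (intro allI impI, rule ccontr)
      fix k assume k: "k<N" "\<not> I N x k < m N"
      have "\<exists>k<N. m N \<le> map (I N x) [0..<N] ! k" using k by (intro exI[of _ k]) auto
      moreover have "\<forall>k<N. I N x k = map (I N x) [0..<N] ! k" by auto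
      ultimately show False using h L by blast
    qed
  qed
qed


lemma sq_summable: "summable (\<lambda>j::nat. 1 / (real j + 1) ^ 2)"
proof -
  have "summable (\<lambda>n::nat. inverse (real n ^ 2))" by (rule inverse_power_summable) auto
  then have "summable (\<lambda>n::nat. inverse (real (Suc n) ^ 2))" by (subst summable_Suc_iff)
  then show ?thesis by (simp add: inverse_eq_divide add.commute)
qed

lemma term_bound:
  fixes \<eta> :: real and p K j :: nat
  assumes eta: "\<eta> > 0" and r2: "real p / \<eta> \<ge> 2" and K1: "K \<ge> 1"
  shows "exp (- (real (K+j) powr (1/\<eta>))) \<le> fact p * real K powr (2 - real p / \<eta>) * (1 / (real j + 1) ^ 2)"
proof -
  define k where "k = real (K+j)"
  define r where "r = real p / \<eta>"
  define t where "t = k powr (1/\<eta>)"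
  have k1: "k \<ge> 1" using K1 unfolding k_def by simp
  have tpos: "t > 0" using k1 unfolding t_def by simp
  have tp: "t ^ p = k powr r"
  proof -
    have "t ^ p = t powr real p" using tpos by (simp add: powr_realpow)
    also have "\<dots> = k powr r" unfolding t_def r_def using k1 by (simp add: powr_powr)
    finally show ?thesis .
  qed
  have "t ^ p / fact p \<le> exp t" using tpos exp_ge_term by simp
  then have "exp (- t) \<le> fact p / t ^ p"
    using tpos by (simp add: exp_minus field_simps)
  also have "\<dots> = fact p * k powr (- r)" using k1 tp by (simp add: powr_minus divide_inverse)
  also have "k powr (- r) = k powr (2 - r) * k powr (-2)" using k1 by (simp add: powr_add[symmetric])
  also have "\<dots> \<le> real K powr (2 - r) * (1 / (real j + 1) ^ 2)"
  proof (rule mult_mono)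
    show "k powr (2 - r) \<le> real K powr (2 - r)"
      using r2 K1 unfolding k_def r_def by (intro powr_mono2') auto
    have "k powr (-2) = 1 / k ^ 2" using k1 by (simp add: powr_minus powr_realpow divide_inverse)
    also have "\<dots> \<le> 1 / (real j + 1) ^ 2"
      using K1 unfolding k_def by (intro divide_left_mono power_mono) auto
    finally show "k powr (-2) \<le> 1 / (real j + 1) ^ 2" .
  qed auto
  finally show ?thesis unfolding t_def k_def r_def by (simp add: mult_left_mono mult.assoc)
qed

lemma ev_cond:
  assumes "\<gamma> > 0" "a > 0"
  shows "eventually (\<lambda>N::nat. 3 * ln (2 * (real N powr \<gamma> + 1) + 2) \<le> real N powr a) sequentially"
  using assms by real_asymp
theorem lemma4p7:
  fixes M :: "'a measure" and \<gamma> \<beta> \<eta>' :: real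
    and w :: "nat \<Rightarrow> 'a \<Rightarrow> real" and I :: "nat \<Rightarrow> 'a \<Rightarrow> nat \<Rightarrow> nat"
    and E :: "nat \<Rightarrow> 'a set"
  assumes "prob_space M"
    and "\<gamma> > 1" and "0 < \<beta>" and "\<beta> < 1"
    and "is_ppp_inv_sq M w"
    and "is_cond_swor M \<beta> (\<lambda>N. nat \<lceil>real N powr \<gamma>\<rceil>) w I"
    and "\<And>N. E N \<in> sets M"
    and "\<eta>' > 0"
    and "(\<lambda>N. real N powr \<eta>' * measure M (E N)) \<longlonglongrightarrow> 0"
  shows "\<forall>\<eta>>0. (\<lambda>N. \<integral>\<^sup>+ x\<in>E N. ennreal (\<bar>ln (\<Sum>k<N. w (I N x k) x)\<bar> powr \<eta>) \<partial>M)
                 \<longlonglongrightarrow> 0"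
proof (intro allI impI)
  fix \<eta> :: real assume eta: "\<eta> > 0"
  note PS = assms(1) and PPP = assms(5) and SW = assms(6) and EM = assms(7) and et' = assms(8)
  interpret prob_space M by fact
  have wm[measurable]: "\<And>i. w i \<in> borel_measurable M" using PPP unfolding is_ppp_inv_sq_def by blast
  define m where "m = (\<lambda>N::nat. nat \<lceil>real N powr \<gamma>\<rceil>)"
  define K where "K = (\<lambda>N::nat. nat \<lceil>real N powr \<eta>'\<rceil>)"
  define p where "p = nat \<lceil>\<eta> * (2 + 2/\<eta>')\<rceil>"
  define r where "r = real p / \<eta>"
  define Z where "Z = (\<Sum>j. 1 / (real j + 1) ^ 2)"
  define t where "t = (\<lambda>N j. real (K N + j) powr (1/\<eta>))"
  define b where "b = (\<lambda>N. real (K N) * measure M (E N) + (real N + 1) * fact p * real (K N) powr (2 - r) * Z)"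
  have r2: "r \<ge> 2 + 2/\<eta>'"
  proof -
    have "\<eta> * (2 + 2/\<eta>') \<le> real p" unfolding p_def by linarith
    then show ?thesis unfolding r_def using eta by (simp add: field_simps)
  qed
  have rge2: "r \<ge> 2" using r2 et' by (smt (verit) divide_pos_pos)
  have g0: "0 < \<gamma>" using assms(2) by simp
  have Z0: "Z \<ge> 0" unfolding Z_def using sq_summable by (intro suminf_nonneg) auto
  have bound: "eventually (\<lambda>N. (\<integral>\<^sup>+ x\<in>E N. ennreal (\<bar>ln (\<Sum>k<N. w (I N x k) x)\<bar> powr \<eta>) \<partial>M)
       \<le> ennreal (b N)) sequentially"
    using eventually_ge_at_top[of 1] ev_cond[of \<gamma> "\<eta>'/\<eta>", OF g0 divide_pos_pos[OF et' eta]]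
  proof eventually_elim
    case (elim N)
    from elim have N1: "N \<ge> 1" and cond: "3 * ln (2 * (real N powr \<gamma> + 1) + 2) \<le> real N powr (\<eta>'/\<eta>)" by auto
    have Ng: "real N powr \<gamma> \<ge> 1" using N1 assms(2) by (intro ge_one_powr_ge_zero) auto
    have m1: "m N \<ge> 1" unfolding m_def using Ng by linarith
    have mle: "real (m N) \<le> real N powr \<gamma> + 1" unfolding m_def using Ng by linarith
    have Ne: "real N powr \<eta>' \<ge> 1" using N1 et' by (intro ge_one_powr_ge_zero) auto
    have K1: "K N \<ge> 1" unfolding K_def using Ne by linarith
    have Kge: "real (K N) \<ge> real N powr \<eta>'" unfolding K_def by linarith
    have tcond: "t N j \<ge> 3 * ln (2 * real (m N) + 2)" for j
    proof -
      have "3 * ln (2 * real (m N) + 2) \<le> 3 * ln (2 * (real N powr \<gamma> + 1) + 2)"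
        using mle by simp
      also have "\<dots> \<le> real N powr (\<eta>'/\<eta>)" by (rule cond)
      also have "real N powr (\<eta>'/\<eta>) = (real N powr \<eta>') powr (1/\<eta>)"
        by (simp add: powr_powr)
      also have "\<dots> \<le> real (K N + j) powr (1/\<eta>)"
        using Kge Ne eta by (intro powr_mono2) auto
      finally show ?thesis unfolding t_def .
    qed
    define A where "A = (\<lambda>j. {x \<in> space M. exp (t N j) / real N < w 0 x})"
    define B where "B = (\<lambda>j. {x \<in> space M. w (m N - 1) x < exp (- t N j)})"
    have A[measurable]: "A j \<in> sets M" for j unfolding A_def by measurable
    have B[measurable]: "B j \<in> sets M" for j unfolding B_def by measurable
    have EN[measurable]: "E N \<in> sets M" by (rule EM)
    define C where "C = (real N + 1) * fact p * real (K N) powr (2 - r)"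
    have C0: "C \<ge> 0" unfolding C_def by simp
    have step1: "(\<integral>\<^sup>+ x\<in>E N. ennreal (\<bar>ln (\<Sum>k<N. w (I N x k) x)\<bar> powr \<eta>) \<partial>M)
       \<le> (\<integral>\<^sup>+ x. ennreal (real (K N)) * indicator (E N) x + (\<Sum>j. indicator (A j) x + indicator (B j) x) \<partial>M)"
    proof (rule nn_integral_mono_AE)
      have V: "AE x in M. \<forall>k<N. I N x k < m N"
        using I_valid[OF PS SW, of N] unfolding m_def .
      show "AE x in M. ennreal (\<bar>ln (\<Sum>k<N. w (I N x k) x)\<bar> powr \<eta>) * indicator (E N) x
          \<le> ennreal (real (K N)) * indicator (E N) x + (\<Sum>j. indicator (A j) x + indicator (B j) x)"
        using V ppp_decr[OF PPP]
      proof (eventually_elim)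
        case (elim x)
        show ?case
        proof (cases "x \<in> E N")
          case False then show ?thesis by simp
        next
          case True
          then have xs: "x \<in> space M" using EM sets.sets_into_space by blast
          have eqj: "(if exp (real (K N + j) powr (1/\<eta>)) / real N < w 0 x then 1 else 0)
             + (if w (m N - 1) x < exp (- (real (K N + j) powr (1/\<eta>))) then 1 else 0)
             = (indicator (A j) x + indicator (B j) x :: ennreal)" for j
            using xs unfolding A_def B_def t_def by (simp add: indicator_def)
          have "ennreal (\<bar>ln (\<Sum>k<N. w (I N x k) x)\<bar> powr \<eta>) \<le> ennreal (real (K N)) +
             (\<Sum>j. (if exp (real (K N + j) powr (1/\<eta>)) / real N < w 0 x then 1 else 0)
             + (if w (m N - 1) x < exp (- (real (K N + j) powr (1/\<eta>))) then 1 else 0))"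
            using elim by (intro pointwise N1 eta) auto
          then show ?thesis using True by (simp only: eqj indicator_simps mult_1_right)
        qed
      qed
    qed
    also have "\<dots> = ennreal (real (K N)) * emeasure M (E N) + (\<Sum>j. emeasure M (A j) + emeasure M (B j))"
    proof -
      have "(\<integral>\<^sup>+ x. ennreal (real (K N)) * indicator (E N) x + (\<Sum>j. indicator (A j) x + indicator (B j) x) \<partial>M)
          = (\<integral>\<^sup>+ x. ennreal (real (K N)) * indicator (E N) x \<partial>M) + (\<integral>\<^sup>+ x. (\<Sum>j. indicator (A j) x + indicator (B j) x) \<partial>M)"
        by (intro nn_integral_add) measurable
      also have "(\<integral>\<^sup>+ x. (\<Sum>j. indicator (A j) x + indicator (B j) x) \<partial>M) = (\<Sum>j. \<integral>\<^sup>+ x. indicator (A j) x + indicator (B j) x \<partial>M)"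
        by (intro nn_integral_suminf) measurable
      also have "\<dots> = (\<Sum>j. emeasure M (A j) + emeasure M (B j))"
        by (simp add: nn_integral_add)
      finally show ?thesis using EM by (simp add: nn_integral_cmult_indicator)
    qed
    also have "\<dots> \<le> ennreal (real (K N) * measure M (E N)) + (\<Sum>j. ennreal (C * (1 / (real j + 1) ^ 2)))"
    proof (rule add_mono)
      show "ennreal (real (K N)) * emeasure M (E N) \<le> ennreal (real (K N) * measure M (E N))"
        by (simp add: emeasure_eq_measure ennreal_mult)
      show "(\<Sum>j. emeasure M (A j) + emeasure M (B j)) \<le> (\<Sum>j. ennreal (C * (1 / (real j + 1) ^ 2)))"
      proof (rule suminf_le)
        fix j
        have mA: "measure M (A j) \<le> real N * exp (- t N j)"
        proof -
          have "measure M (A j) \<le> 1 / (exp (t N j) / real N)"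
            unfolding A_def using N1 by (intro w0_tail PS PPP) auto
          then show ?thesis by (simp add: exp_minus divide_inverse mult.commute)
        qed
        have mB: "measure M (B j) \<le> exp (- t N j)"
        proof -
          have "measure M (B j) \<le> (\<Sum>k<m N. exp (- (1 / exp (- t N j))) * (1 / exp (- t N j)) ^ k / fact k)"
            unfolding B_def by (intro wm_tail PS PPP m1) auto
          also have "\<dots> = (\<Sum>k<m N. exp (- exp (t N j)) * exp (t N j) ^ k / fact k)"
            by (simp add: exp_minus divide_inverse)
          also have "\<dots> \<le> exp (- t N j)" by (intro poisson_tail m1 tcond)
          finally show ?thesis .
        qed
        have "exp (- t N j) \<le> fact p * real (K N) powr (2 - r) * (1 / (real j + 1) ^ 2)"
          unfolding t_def r_def using eta rge2 K1 by (intro term_bound) (auto simp: r_def)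
        then have "measure M (A j) + measure M (B j) \<le> (real N + 1) * (fact p * real (K N) powr (2 - r) * (1 / (real j + 1) ^ 2))"
        proof -
          have "measure M (A j) + measure M (B j) \<le> (real N + 1) * exp (- t N j)"
            using mA mB by (simp add: algebra_simps)
          also have "\<dots> \<le> (real N + 1) * (fact p * real (K N) powr (2 - r) * (1 / (real j + 1) ^ 2))"
            by (rule mult_left_mono) (use \<open>exp (- t N j) \<le> _\<close> in auto)
          finally show ?thesis .
        qed
        then show "emeasure M (A j) + emeasure M (B j) \<le> ennreal (C * (1 / (real j + 1) ^ 2))"
          unfolding C_def by (simp add: emeasure_eq_measure ennreal_plus[symmetric] mult.assoc del: ennreal_plus)
      qed auto
    qed
    also have "(\<Sum>j. ennreal (C * (1 / (real j + 1) ^ 2))) = ennreal (C * Z)"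
    proof -
      have "(\<Sum>j. ennreal (C * (1 / (real j + 1) ^ 2))) = ennreal (\<Sum>j. C * (1 / (real j + 1) ^ 2))"
        using C0 sq_summable by (intro suminf_ennreal2 summable_mult) auto
      also have "(\<Sum>j. C * (1 / (real j + 1) ^ 2)) = C * Z" unfolding Z_def
        using sq_summable by (rule suminf_mult)
      finally show ?thesis .
    qed
    also have "ennreal (real (K N) * measure M (E N)) + ennreal (C * Z) = ennreal (b N)"
      unfolding b_def C_def using C0 Z0 by (simp add: ennreal_plus[symmetric] C_def del: ennreal_plus)
    finally show ?case .
  qed
  have blim: "b \<longlonglongrightarrow> 0"
  proof (rule tendsto_sandwich[of "\<lambda>_. 0" _ _ "\<lambda>N. 2 * (real N powr \<eta>' * measure M (E N)) + 2 * fact p * Z / real N"])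
    show "eventually (\<lambda>N. 0 \<le> b N) sequentially"
      unfolding b_def using Z0 by (intro always_eventually allI) simp
    show "(\<lambda>_. 0::real) \<longlonglongrightarrow> 0" by simp
    have "(\<lambda>N. 2 * (real N powr \<eta>' * measure M (E N)) + 2 * fact p * Z / real N) \<longlonglongrightarrow> 2 * 0 + 0"
      by (intro tendsto_intros assms(9))
    then show "(\<lambda>N. 2 * (real N powr \<eta>' * measure M (E N)) + 2 * fact p * Z / real N) \<longlonglongrightarrow> 0" by simp
    show "eventually (\<lambda>N. b N \<le> 2 * (real N powr \<eta>' * measure M (E N)) + 2 * fact p * Z / real N) sequentially"
      using eventually_ge_at_top[of 1]
    proof eventually_elim
      case (elim N)
      then have N1: "N \<ge> 1" by simp
      have Ne: "real N powr \<eta>' \<ge> 1" using N1 et' by (intro ge_one_powr_ge_zero) auto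
      have Kge: "real (K N) \<ge> real N powr \<eta>'" unfolding K_def by linarith
      have Kle: "real (K N) \<le> 2 * real N powr \<eta>'" unfolding K_def using Ne by linarith
      have "real (K N) powr (2 - r) \<le> (real N powr \<eta>') powr (2 - r)"
        using rge2 Ne Kge N1 by (intro powr_mono2') auto
      also have "\<dots> = real N powr (\<eta>' * (2 - r))" by (simp add: powr_powr)
      also have "\<dots> \<le> real N powr (-2)"
      proof (rule powr_mono)
        have "\<eta>' * (r - 2) \<ge> \<eta>' * (2/\<eta>')" using r2 et' by (intro mult_left_mono) auto
        then show "\<eta>' * (2 - r) \<le> -2" using et' by (simp add: algebra_simps)
      qed (use N1 in auto)
      also have "\<dots> = 1 / real N ^ 2" using N1 by (simp add: powr_minus powr_realpow divide_inverse)
      finally have KP: "real (K N) powr (2 - r) \<le> 1 / real N ^ 2" .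
      have "(real N + 1) * fact p * real (K N) powr (2 - r) * Z \<le> (real N + 1) * fact p * (1 / real N ^ 2) * Z"
        using KP Z0 by (intro mult_right_mono mult_left_mono) auto
      also have "\<dots> \<le> 2 * fact p * Z / real N"
      proof -
        have "(real N + 1) / real N ^ 2 \<le> 2 / real N" using N1 by (simp add: field_simps power2_eq_square)
        then have "(real N + 1) * (1 / real N ^ 2) * (fact p * Z) \<le> 2 / real N * (fact p * Z)"
          using Z0 by (intro mult_right_mono) auto
        then show ?thesis by (simp add: algebra_simps)
      qed
      finally have T2: "(real N + 1) * fact p * real (K N) powr (2 - r) * Z \<le> 2 * fact p * Z / real N" .
      have T1: "real (K N) * measure M (E N) \<le> 2 * (real N powr \<eta>' * measure M (E N))"
        using Kle by (simp add: mult_right_mono measure_nonneg mult.assoc[symmetric])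
      show ?case unfolding b_def using T1 T2 by linarith
    qed
  qed
  have "(\<lambda>N. ennreal (b N)) \<longlonglongrightarrow> ennreal 0" by (intro tendsto_ennrealI blim)
  then have "(\<lambda>N. ennreal (b N)) \<longlonglongrightarrow> 0" by simp
  show "(\<lambda>N. \<integral>\<^sup>+ x\<in>E N. ennreal (\<bar>ln (\<Sum>k<N. w (I N x k) x)\<bar> powr \<eta>) \<partial>M) \<longlonglongrightarrow> 0"
  proof (rule tendsto_sandwich[OF _ bound])
    show "eventually (\<lambda>N. (0::ennreal) \<le> (\<integral>\<^sup>+ x\<in>E N. ennreal (\<bar>ln (\<Sum>k<N. w (I N x k) x)\<bar> powr \<eta>) \<partial>M)) sequentially"
      by simp
  qed (use \<open>(\<lambda>N. ennreal (b N)) \<longlonglongrightarrow> 0\<close> in auto)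
qed

end
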